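(* For every $T\in\mathrm{SSYT}_n$, \[ \mathsf P(\mathsf D(T))=\Phi_T(Y)\cdot\varphi_T(Y). \]
   Context: $\mathrm{SSYT}_n$: semistandard Young tableaux with entries in $[n]$, identified with their column sequences $(C_1,\dots,C_\ell)$, $C_j$ the set of entries of column $j$, $T_{ij}$ the entry in row $i$, column $j$. For cells $(i,j),(i,j+1)$ both in $T$, $\mathrm{Leg}^+_T(i,j)=C_j\cap\{T_{ij},\dots,T_{i,j+1}\}$ if $T_{i,j+1}\notin C_j$, else $\varnothing$; $\Phi_T(Y)=\prod_{\mathrm{Leg}^+_T(i,j)\neq\varnothing}(1-Y^{\#\mathrm{Leg}^+_T(i,j)})$. Dyck words: finite words in letters $\mathbf 0,\mathbf 1$ with equally many of each and no prefix containing more $\mathbf 1$s than $\mathbf 0$s. For a two-column tableau $(C_1,C_2)$ put $\bar C_1=C_1\setminus C_2$, $\bar C_2=C_2\setminus C_1$, $a=\#\bar C_1\ge b=\#\bar C_2$; $\mathsf D((C_1,C_2))$ is obtained by listing the elements of $\bar C_1\cup\bar C_2$ in increasing order, replacing each element of $\bar C_1$ by $\mathbf 0$ and each element of $\bar C_2$ by $\mathbf 1$, and appending $a-b$ further letters $\mathbf 1$. For $T=(C_1,\dots,C_\ell)$, $\mathsf D(T)$ is the concatenation $\mathsf D((C_1,C_2))\mathsf D((C_2,C_3))\cdots\mathsf D((C_{\ell-1},C_\ell))$ (empty if $\ell\le1$). Write $[\![0]\!]=1$, $[\![m]\!]=1-Y^m$ and $[\![m]\!]!=\prod_{j=1}^m[\![j]\!]$.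 A Dyck word is uniquely $w=\mathbf 0^{\ell_1}\mathbf 1^{m_1}\cdots\mathbf 0^{\ell_r}\mathbf 1^{m_r}$ with $r\ge0$, $\ell_i,m_i\ge1$; set $b_k=\sum_{i\le k}(\ell_i-m_i)$ and $t_k=m_k+b_k$, and $\mathsf P(w)=\prod_{k=1}^r\frac{[\![t_k]\!]!}{[\![b_k]\!]!}\in\mathbb Z[Y]$. The phantom factor is $\varphi_T(Y)=\prod_{s=1}^{\ell-1}[\![\#C_s-\#C_{s+1}]\!]!$. *)

theory Defs
  imports "HOL-Computational_Algebra.Polynomial"
begin

text \<open>A tableau is the list of its column sets (C_1,...,C_l), each a finite set of naturals.
  Rows are indexed from 0: entry C i is the (i+1)-st smallest element of C.\<close>

definition entry :: "nat set \<Rightarrow> nat \<Rightarrow> nat" where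
  "entry C i = sorted_list_of_set C ! i"

definition SSYT :: "nat \<Rightarrow> nat set list \<Rightarrow> bool" where
  "SSYT n T \<longleftrightarrow>
     (\<forall>C\<in>set T. C \<noteq> {} \<and> C \<subseteq> {1..n}) \<and>
     (\<forall>j. Suc j < length T \<longrightarrow>
        card (T ! Suc j) \<le> card (T ! j) \<and>
        (\<forall>i < card (T ! Suc j). entry (T ! j) i \<le> entry (T ! Suc j) i))"

definition LegPlus :: "nat set list \<Rightarrow> nat \<Rightarrow> nat \<Rightarrow> nat set" where
  "LegPlus T i j =
     (if entry (T ! Suc j) i \<notin> T ! j
      then T ! j \<inter> {entry (T ! j) i .. entry (T ! Suc j) i} else {})"

definition qint :: "nat \<Rightarrow> int poly" where
  "qint m = 1 - [:0, 1:] ^ m"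

definition qfact :: "nat \<Rightarrow> int poly" where
  "qfact m = (\<Prod>j\<in>{1..m}. qint j)"

definition Phi :: "nat set list \<Rightarrow> int poly" where
  "Phi T = (\<Prod>(i,j)\<in>{(i,j). Suc j < length T \<and> i < card (T ! Suc j) \<and> LegPlus T i j \<noteq> {}}.
              qint (card (LegPlus T i j)))"

definition phantom :: "nat set list \<Rightarrow> int poly" where
  "phantom T = (\<Prod>s<length T - 1. qfact (card (T ! s) - card (T ! Suc s)))"

datatype letter = L0 | L1

definition D2 :: "nat set \<Rightarrow> nat set \<Rightarrow> letter list" where
  "D2 C1 C2 =
     (let B1 = C1 - C2; B2 = C2 - C1 in
      map (\<lambda>x. if x \<in> B1 then L0 else L1) (sorted_list_of_set (B1 \<union> B2))
      @ replicate (card B1 - card B2) L1)"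

fun D :: "nat set list \<Rightarrow> letter list" where
  "D (C1 # C2 # Cs) = D2 C1 C2 @ D (C2 # Cs)"
| "D _ = []"

function blocks :: "letter list \<Rightarrow> (nat \<times> nat) list" where
  "blocks w =
     (if w = [] then []
      else (let l = length (takeWhile (\<lambda>x. x = L0) w);
                w' = dropWhile (\<lambda>x. x = L0) w;
                m = length (takeWhile (\<lambda>x. x = L1) w');
                w'' = dropWhile (\<lambda>x. x = L1) w'
            in (l, m) # blocks w''))"
  by pat_completeness auto
termination
proof (relation "measure length")
  fix w :: "letter list" and l w' m w''
  assume "w \<noteq> []" and w': "w' = dropWhile (\<lambda>x. x = L0) w"
     and w'': "w'' = dropWhile (\<lambda>x. x = L1) w'"
  show "(w'', w) \<in> measure length"
  proof (cases w)
    case Nil with \<open>w \<noteq> []\<close> show ?thesis by simp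
  next
    case (Cons a u)
    have le1: "length w' \<le> length w" using w' by (simp add: length_dropWhile_le)
    have le2: "length w'' \<le> length w'" using w'' by (simp add: length_dropWhile_le)
    show ?thesis
    proof (cases a)
      case L0
      hence "length w' < length w" using w' Cons
        by (simp add: le_imp_less_Suc length_dropWhile_le)
      thus ?thesis using le2 by simp
    next
      case L1
      hence "w' = w" using w' Cons by simp
      hence "length w'' < length w'" using w'' Cons L1
        by (simp add: le_imp_less_Suc length_dropWhile_le)
      thus ?thesis using \<open>w' = w\<close> by simp
    qed
  qed
qed simp

definition P :: "letter list \<Rightarrow> int poly" where
  "P w = (let bl = blocks w;
              b = (\<lambda>k. \<Sum>i\<le>k. int (fst (bl ! i)) - int (snd (bl ! i)));
              t = (\<lambda>k. int (snd (bl ! k)) + b k)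
          in \<Prod>k<length bl. qfact (nat (t k)) div qfact (nat (b k)))"

end

theory Submission
  imports Defs
begin

fun H :: "int \<Rightarrow> letter list \<Rightarrow> int poly" where
  "H h [] = 1"
| "H h (L0 # w) = H (h + 1) w"
| "H h (L1 # w) = qint (nat h) * H (h - 1) w"

fun dl :: "letter list \<Rightarrow> int" where
  "dl [] = 0"
| "dl (L0 # w) = dl w + 1"
| "dl (L1 # w) = dl w - 1"

lemma dl_append[simp]: "dl (xs @ ys) = dl xs + dl ys"
  by (induction xs rule: dl.induct) auto

lemma H_append: "H h (xs @ ys) = H h xs * H (h + dl xs) ys"
  by (induction h xs rule: H.induct) (auto simp: algebra_simps)

lemma qint_nz: "k \<ge> 1 \<Longrightarrow> qint k \<noteq> 0"
proof
  assume "k \<ge> 1" "qint k = 0"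
  hence "poly (qint k) 0 = 0" by simp
  thus False using \<open>k \<ge> 1\<close> by (simp add: qint_def power_0_left)
qed

lemma qint0[simp]: "qint 0 = 0" by (simp add: qint_def)

lemma qfact_Suc: "qfact (Suc k) = qint (Suc k) * qfact k"
  by (simp add: qfact_def atLeastAtMostSuc_conv)

lemma qfact_nz: "qfact k \<noteq> 0"
  unfolding qfact_def by (auto simp: qint_nz)

lemma H_rep0[simp]: "H h (replicate l L0) = 1"
  by (induction l arbitrary: h) auto

lemma dl_rep0[simp]: "dl (replicate l L0) = int l"
  by (induction l) auto

lemma dl_rep1[simp]: "dl (replicate l L1) = - int l"
  by (induction l) auto

lemma H_rep1: "m \<le> N \<Longrightarrow> H (int N) (replicate m L1) * qfact (N - m) = qfact N"
proof (induction m arbitrary: N)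
  case 0 then show ?case by simp
next
  case (Suc m)
  then obtain N' where N: "N = Suc N'" by (cases N) auto
  have nn: "nat (1 + int N') = Suc N'" by arith
  have nn2: "int N - 1 = int N'" using N by simp
  have "H (int N) (replicate (Suc m) L1) = qint N * H (int N') (replicate m L1)"
    using N nn nn2 by simp
  moreover have "H (int N') (replicate m L1) * qfact (N' - m) = qfact N'"
    using Suc N by simp
  ultimately show ?case using N nn by (simp add: qfact_Suc mult.assoc)
qed

lemma H_rep1_zero: "0 \<le> g \<Longrightarrow> g < int m \<Longrightarrow> H g (replicate m L1) = 0"
proof (induction m arbitrary: g)
  case 0 then show ?case by simp
next
  case (Suc m)
  show ?case
  proof (cases "g = 0")
    case True then show ?thesis by simp
  next
    case False then show ?thesis using Suc by simp
  qed
qed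

lemma H_rep1_full: "int m \<le> N \<Longrightarrow> 0 \<le> N \<Longrightarrow>
   H N (replicate m L1) = qfact (nat N) div qfact (nat (N - int m))"
proof -
  assume a: "int m \<le> N" "0 \<le> N"
  have "H (int (nat N)) (replicate m L1) * qfact (nat N - m) = qfact (nat N)"
    using a by (intro H_rep1) auto
  moreover have "nat (N - int m) = nat N - m" using a by auto
  ultimately show ?thesis using a qfact_nz by (metis nonzero_mult_div_cancel_right int_nat_eq)
qed

lemma H_repm: "H (int k) (replicate k L1) = qfact k"
  using H_rep1[of k k] by (simp add: qfact_def)

definition Pg :: "int \<Rightarrow> (nat \<times> nat) list \<Rightarrow> int poly" where
  "Pg h bl = (let b = (\<lambda>k. \<Sum>i\<le>k. int (fst (bl ! i)) - int (snd (bl ! i)));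
              t = (\<lambda>k. int (snd (bl ! k)) + b k)
          in \<Prod>k<length bl. qfact (nat (h + t k)) div qfact (nat (h + b k)))"

lemma P_Pg: "P w = Pg 0 (blocks w)"
  unfolding P_def Pg_def Let_def by (simp del: blocks.simps)

lemma Pg_Nil[simp]: "Pg h [] = 1" by (simp add: Pg_def)

lemma Pg_Cons: "Pg h ((l, m) # bl) =
   qfact (nat (h + int l)) div qfact (nat (h + int l - int m)) * Pg (h + int l - int m) bl"
proof -
  have sh: "(\<Sum>i\<le>Suc k. int (fst (((l, m) # bl) ! i)) - int (snd (((l, m) # bl) ! i)))
      = int l - int m + (\<Sum>i\<le>k. int (fst (bl ! i)) - int (snd (bl ! i)))" for k
    by (subst sum.atMost_Suc_shift) simp
  show ?thesis
    unfolding Pg_def Let_def length_Cons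
    by (subst prod.lessThan_Suc_shift) (simp add: sh algebra_simps del: sum.atMost_Suc prod.lessThan_Suc)
qed

lemma H_blocks: "0 \<le> h \<Longrightarrow> H h w \<noteq> 0 \<Longrightarrow> H h w = Pg h (blocks w)"
proof (induction w arbitrary: h rule: blocks.induct)
  case (1 w)
  show ?case
  proof (cases "w = []")
    case True then show ?thesis by (simp add: blocks.simps)
  next
    case False
    define l where "l = length (takeWhile (\<lambda>x. x = L0) w)"
    define w' where "w' = dropWhile (\<lambda>x. x = L0) w"
    define m where "m = length (takeWhile (\<lambda>x. x = L1) w')"
    define w'' where "w'' = dropWhile (\<lambda>x. x = L1) w'"
    have bl: "blocks w = (l, m) # blocks w''"
      using False unfolding l_def w'_def m_def w''_def
      by (subst blocks.simps) (simp add: Let_def)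
    have t0: "takeWhile (\<lambda>x. x = L0) w = replicate l L0"
      unfolding l_def by (metis (mono_tags) replicate_length_same set_takeWhileD)
    have t1: "takeWhile (\<lambda>x. x = L1) w' = replicate m L1"
      unfolding m_def by (metis (mono_tags) replicate_length_same set_takeWhileD)
    have ww: "w = replicate l L0 @ replicate m L1 @ w''"
      using t0 t1 unfolding w'_def w''_def by (metis takeWhile_dropWhile_id)
    have HH: "H h w = H (h + int l) (replicate m L1) * H (h + int l - int m) w''"
      by (subst ww) (simp add: H_append)
    have nz1: "H (h + int l) (replicate m L1) \<noteq> 0" and nz2: "H (h + int l - int m) w'' \<noteq> 0"
      using "1.prems"(2) HH by auto
    have mle: "int m \<le> h + int l"
      using nz1 H_rep1_zero[of "h + int l" m] "1.prems"(1) by force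
    have IH: "H (h + int l - int m) w'' = Pg (h + int l - int m) (blocks w'')"
      using "1.IH"[OF False l_def w'_def m_def w''_def] mle nz2 "1.prems"(1) by (simp del: blocks.simps)
    show ?thesis
      using HH IH mle "1.prems"(1) by (simp add: bl Pg_Cons H_rep1_full del: blocks.simps)
  qed
qed

definition wd :: "nat set \<Rightarrow> nat set \<Rightarrow> letter list" where
  "wd X S = map (\<lambda>x. if x \<in> X then L0 else L1) (sorted_list_of_set S)"

lemma sorted_list_insert_max:
  assumes "finite A" "\<forall>a\<in>A. a < b"
  shows "sorted_list_of_set (insert b A) = sorted_list_of_set A @ [b]"
proof -
  have "b \<notin> A" using assms by auto
  hence "sorted_list_of_set (insert b A) = insort b (sorted_list_of_set A)"
    using assms by (simp add: sorted_list_of_set_insert)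
  also have "\<dots> = sorted_list_of_set A @ [b]"
    using assms by (intro sorted_insort_is_snoc) (auto simp: less_imp_le)
  finally show ?thesis .
qed

lemma wd_lemma:
  assumes "finite S"
  shows "dl (wd X S) = int (card (S \<inter> X)) - int (card (S - X)) \<and>
         H 0 (wd X S) = (\<Prod>x\<in>S - X. qint (card {y\<in>S \<inter> X. y < x} - card {y\<in>S - X. y < x}))"
  using assms
proof (induction S rule: finite_linorder_max_induct)
  case empty then show ?case by (simp add: wd_def)
next
  case (insert b A)
  have bA: "b \<notin> A" using insert by auto
  have w: "wd X (insert b A) = wd X A @ [if b \<in> X then L0 else L1]"
    unfolding wd_def sorted_list_insert_max[OF insert(1,2)] by simp
  have fA: "finite (A \<inter> X)" "finite (A - X)" using insert by auto
  have eq1: "{y\<in>insert b A \<inter> X. y < x} = {y\<in>A \<inter> X. y < x}" if "x \<in> A" for x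
    using that insert by auto
  have eq2: "{y\<in>insert b A - X. y < x} = {y\<in>A - X. y < x}" if "x \<in> A" for x
    using that insert by auto
  show ?case
  proof (cases "b \<in> X")
    case True
    have c1: "insert b A \<inter> X = insert b (A \<inter> X)" "insert b A - X = A - X" using True by auto
    have "(\<Prod>x\<in>insert b A - X. qint (card {y\<in>insert b A \<inter> X. y < x} - card {y\<in>insert b A - X. y < x}))
        = (\<Prod>x\<in>A - X. qint (card {y\<in>A \<inter> X. y < x} - card {y\<in>A - X. y < x}))"
      proof (rule prod.cong[OF c1(2)])
        fix x assume "x \<in> A - X" hence xA: "x \<in> A" by simp
        show "qint (card {y\<in>insert b A \<inter> X. y < x} - card {y\<in>insert b A - X. y < x}) = qint (card {y\<in>A \<inter> X. y < x} - card {y\<in>A - X. y < x})"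
          by (simp only: eq1[OF xA] eq2[OF xA])
      qed
    then show ?thesis using insert.IH True bA fA by (simp add: w H_append c1)
  next
    case False
    have c1: "insert b A \<inter> X = A \<inter> X" "insert b A - X = insert b (A - X)" using False by auto
    have "(\<Prod>x\<in>insert b A - X. qint (card {y\<in>insert b A \<inter> X. y < x} - card {y\<in>insert b A - X. y < x}))
        = qint (card (A \<inter> X) - card (A - X)) *
          (\<Prod>x\<in>A - X. qint (card {y\<in>A \<inter> X. y < x} - card {y\<in>A - X. y < x}))"
    proof -
      have "{y\<in>insert b A \<inter> X. y < b} = A \<inter> X" "{y\<in>insert b A - X. y < b} = A - X"
        using insert by auto
      moreover have "(\<Prod>x\<in>A - X. qint (card {y\<in>insert b A \<inter> X. y < x} - card {y\<in>insert b A - X. y < x}))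
        = (\<Prod>x\<in>A - X. qint (card {y\<in>A \<inter> X. y < x} - card {y\<in>A - X. y < x}))"
        proof (rule prod.cong[OF refl])
        fix x assume "x \<in> A - X" hence xA: "x \<in> A" by simp
        show "qint (card {y\<in>insert b A \<inter> X. y < x} - card {y\<in>insert b A - X. y < x}) = qint (card {y\<in>A \<inter> X. y < x} - card {y\<in>A - X. y < x})"
          by (simp only: eq1[OF xA] eq2[OF xA])
      qed
      moreover have "(\<Prod>x\<in>insert b A - X. qint (card {y\<in>insert b A \<inter> X. y < x} - card {y\<in>insert b A - X. y < x}))
        = (\<Prod>x\<in>insert b (A - X). qint (card {y\<in>insert b A \<inter> X. y < x} - card {y\<in>insert b A - X. y < x}))"
        by (rule prod.cong[OF c1(2) refl])
      moreover have "(\<Prod>x\<in>insert b (A - X). qint (card {y\<in>insert b A \<inter> X. y < x} - card {y\<in>insert b A - X. y < x}))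
        = qint (card {y\<in>insert b A \<inter> X. y < b} - card {y\<in>insert b A - X. y < b}) * (\<Prod>x\<in>A - X. qint (card {y\<in>insert b A \<inter> X. y < x} - card {y\<in>insert b A - X. y < x}))"
        using fA bA by (rule_tac prod.insert) auto
      ultimately show ?thesis by simp
    qed
    moreover have "nat (int (card (A \<inter> X)) - int (card (A - X))) = card (A \<inter> X) - card (A - X)"
      by simp
    ultimately show ?thesis using insert.IH False bA fA by (simp add: w H_append c1 mult.commute)
  qed
qed

lemma entry_fun: "entry A = (!) (sorted_list_of_set A)"
  by (rule ext) (simp add: entry_def)

lemma entry_bij: "finite A \<Longrightarrow> bij_betw (entry A) {..<card A} A"
  unfolding entry_fun by (rule bij_betw_nth) auto

lemma entry_mem: "finite A \<Longrightarrow> i < card A \<Longrightarrow> entry A i \<in> A"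
  using entry_bij[of A] by (auto simp: bij_betw_def)

lemma entry_less: "finite A \<Longrightarrow> i < j \<Longrightarrow> j < card A \<Longrightarrow> entry A i < entry A j"
  unfolding entry_def
  by (rule sorted_wrt_nth_less[where P="(<)"]) (auto simp: strict_sorted_list_of_set)

lemma entry_card_less:
  assumes "finite A" "i < card A"
  shows "card {y\<in>A. y < entry A i} = i"
proof -
  have b: "bij_betw (entry A) {..<card A} A" using entry_bij assms by auto
  have "{y\<in>A. y < entry A i} = entry A ` {..<i}"
  proof
    show "entry A ` {..<i} \<subseteq> {y\<in>A. y < entry A i}"
      using assms by (auto intro: entry_mem entry_less)
    show "{y\<in>A. y < entry A i} \<subseteq> entry A ` {..<i}"
    proof
      fix y assume y: "y \<in> {y\<in>A. y < entry A i}"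
      then obtain k where k: "k < card A" "y = entry A k"
        using b by (auto simp: bij_betw_def)
      have "k < i"
      proof (rule ccontr)
        assume "\<not> k < i"
        hence "k = i \<or> i < k" by auto
        thus False using entry_less[OF assms(1), of i k] k y by auto
      qed
      thus "y \<in> entry A ` {..<i}" using k by auto
    qed
  qed
  moreover have "inj_on (entry A) {..<i}"
    using b assms by (auto simp: bij_betw_def intro: inj_on_subset)
  ultimately show ?thesis by (simp add: card_image)
qed

definition LP :: "nat set \<Rightarrow> nat set \<Rightarrow> nat \<Rightarrow> nat set" where
  "LP A B i = (if entry B i \<notin> A then A \<inter> {entry A i .. entry B i} else {})"

definition PhiP :: "nat set \<Rightarrow> nat set \<Rightarrow> int poly" where
  "PhiP A B = (\<Prod>i\<in>{i. i < card B \<and> LP A B i \<noteq> {}}. qint (card (LP A B i)))"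

lemma PhiP_nz: "finite A \<Longrightarrow> PhiP A B \<noteq> 0"
proof -
  assume fA: "finite A"
  have fin: "finite {i. i < card B \<and> LP A B i \<noteq> {}}" by auto
  have "qint (card (LP A B i)) \<noteq> 0" if "LP A B i \<noteq> {}" for i
  proof (rule qint_nz)
    have "finite (LP A B i)" using fA by (simp add: LP_def)
    thus "1 \<le> card (LP A B i)" using that by (simp add: Suc_le_eq card_gt_0_iff)
  qed
  thus ?thesis unfolding PhiP_def using prod_zero_iff[OF fin] by auto
qed

lemma PhiP_eq:
  assumes fA: "finite A" and fB: "finite B" and cBA: "card B \<le> card A"
    and ent: "\<forall>i<card B. entry A i \<le> entry B i"
  shows "PhiP A B = (\<Prod>x\<in>B - A. qint (card {y\<in>A - B. y < x} - card {y\<in>B - A. y < x}))"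
proof -
  let ?I = "{i. i < card B \<and> LP A B i \<noteq> {}}"
  have Ieq: "?I = {i. i < card B \<and> entry B i \<notin> A}"
  proof (intro Collect_cong conj_cong refl)
    fix i assume i: "i < card B"
    hence iA: "i < card A" using cBA by simp
    show "(LP A B i \<noteq> {}) = (entry B i \<notin> A)"
      using entry_mem[OF fA iA] ent i by (auto simp: LP_def)
  qed
  have bB: "bij_betw (entry B) {..<card B} B" using entry_bij fB by auto
  have inj: "inj_on (entry B) ?I"
    using bB by (auto simp: bij_betw_def intro: inj_on_subset)
  have img: "B - A = entry B ` ?I"
  proof
    show "entry B ` ?I \<subseteq> B - A" unfolding Ieq using entry_mem[OF fB] by auto
    show "B - A \<subseteq> entry B ` ?I"
    proof
      fix x assume x: "x \<in> B - A"
      then obtain k where "k < card B" "x = entry B k" using bB by (auto simp: bij_betw_def)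
      thus "x \<in> entry B ` ?I" unfolding Ieq using x by auto
    qed
  qed
  have key: "qint (card (LP A B i)) =
      qint (card {y\<in>A - B. y < entry B i} - card {y\<in>B - A. y < entry B i})" if iI: "i \<in> ?I" for i
  proof -
    define x where "x = entry B i"
    have i: "i < card B" "x \<notin> A" using iI Ieq x_def by auto
    hence iA: "i < card A" using cBA by simp
    define ai where "ai = entry A i"
    have aix: "ai \<le> x" using ent i unfolding ai_def x_def by auto
    have LPeq: "LP A B i = {y\<in>A. ai \<le> y \<and> y < x}"
      using i aix unfolding LP_def ai_def x_def by (auto simp: order.order_iff_strict)
    have c1: "card {y\<in>A. y < x} = i + card (LP A B i)"
    proof -
      have U: "{y\<in>A. y < x} = {y\<in>A. y < ai} \<union> {y\<in>A. ai \<le> y \<and> y < x}" using aix by auto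
      have "card {y\<in>A. y < ai} = i" unfolding ai_def using entry_card_less[OF fA iA] .
      moreover have "card {y\<in>A. y < x} = card {y\<in>A. y < ai} + card {y\<in>A. ai \<le> y \<and> y < x}"
        by (subst U, rule card_Un_disjoint) (use fA in auto)
      ultimately show ?thesis unfolding LPeq by simp
    qed
    have c2: "card {y\<in>B. y < x} = i" unfolding x_def using entry_card_less[OF fB i(1)] .
    have c3: "card {y\<in>A. y < x} = card {y\<in>A - B. y < x} + card {y\<in>A \<inter> B. y < x}"
    proof -
      have U: "{y\<in>A. y < x} = {y\<in>A - B. y < x} \<union> {y\<in>A \<inter> B. y < x}" by auto
      show ?thesis by (subst U, rule card_Un_disjoint) (use fA in auto)
    qed
    have c4: "card {y\<in>B. y < x} = card {y\<in>B - A. y < x} + card {y\<in>A \<inter> B. y < x}"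
    proof -
      have U: "{y\<in>B. y < x} = {y\<in>B - A. y < x} \<union> {y\<in>A \<inter> B. y < x}" by auto
      show ?thesis by (subst U, rule card_Un_disjoint) (use fB in auto)
    qed
    have "card (LP A B i) = card {y\<in>A - B. y < x} - card {y\<in>B - A. y < x}"
      using c1 c2 c3 c4 by linarith
    thus ?thesis unfolding x_def by simp
  qed
  show ?thesis unfolding PhiP_def
    by (rule sym, rule prod.reindex_cong[OF inj img]) (use key in simp)
qed

definition okp :: "nat set \<Rightarrow> nat set \<Rightarrow> bool" where
  "okp A B \<longleftrightarrow> finite A \<and> finite B \<and> card B \<le> card A \<and> (\<forall>i<card B. entry A i \<le> entry B i)"

lemma D2_pair:
  assumes "okp A B"
  shows "dl (D2 A B) = 0 \<and> H 0 (D2 A B) = PhiP A B * qfact (card A - card B)"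
proof -
  have fA: "finite A" and fB: "finite B" and cBA: "card B \<le> card A"
    and ent: "\<forall>i<card B. entry A i \<le> entry B i" using assms by (auto simp: okp_def)
  define S where "S = (A - B) \<union> (B - A)"
  have fS: "finite S" using fA fB S_def by auto
  have SX: "S \<inter> (A - B) = A - B" "S - (A - B) = B - A" unfolding S_def by auto
  have cA: "card A = card (A \<inter> B) + card (A - B)"
    using fA by (metis card_Int_Diff inf.commute)
  have cB: "card B = card (A \<inter> B) + card (B - A)"
    using fB by (metis card_Int_Diff inf.commute)
  define k where "k = card (A - B) - card (B - A)"
  have k: "k = card A - card B" "int k = int (card (A - B)) - int (card (B - A))"
    using cA cB cBA unfolding k_def by auto
  have D2e: "D2 A B = wd (A - B) S @ replicate k L1"
    unfolding D2_def wd_def Let_def S_def k_def by simp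
  have W: "dl (wd (A - B) S) = int (card (A - B)) - int (card (B - A))"
     "H 0 (wd (A - B) S) = (\<Prod>x\<in>B - A. qint (card {y\<in>A - B. y < x} - card {y\<in>B - A. y < x}))"
    using wd_lemma[OF fS, of "A - B"] unfolding SX by auto
  have dw: "dl (wd (A - B) S) = int k" using W(1) k(2) by simp
  have "H 0 (D2 A B) = H 0 (wd (A - B) S) * H (int k) (replicate k L1)"
    unfolding D2e H_append dw by simp
  also have "\<dots> = PhiP A B * qfact (card A - card B)"
    unfolding H_repm W(2) PhiP_eq[OF fA fB cBA ent] k(1) ..
  finally show ?thesis unfolding D2e using dw by simp
qed

lemma H_D:
  assumes "\<forall>j. Suc j < length T \<longrightarrow> okp (T ! j) (T ! Suc j)"
  shows "H 0 (D T) = (\<Prod>j<length T - 1. H 0 (D2 (T ! j) (T ! Suc j)))"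
  using assms
proof (induction T rule: D.induct)
  case (1 C1 C2 Cs)
  have p: "okp C1 C2" using "1.prems" by force
  have IH: "H 0 (D (C2 # Cs)) = (\<Prod>j<length (C2 # Cs) - 1. H 0 (D2 ((C2 # Cs) ! j) ((C2 # Cs) ! Suc j)))"
    using "1.prems" by (intro "1.IH") (auto dest: spec[of _ "Suc _"])
  show ?case
    using D2_pair[OF p] IH
    by (simp add: H_append prod.lessThan_Suc_shift del: prod.lessThan_Suc)
qed auto

lemma Phi_eq: "Phi T = (\<Prod>j<length T - 1. PhiP (T ! j) (T ! Suc j))"
proof -
  let ?S = "SIGMA j:{..<length T - 1}. {i. i < card (T ! Suc j) \<and> LP (T ! j) (T ! Suc j) i \<noteq> {}}"
  have set: "{(i,j). Suc j < length T \<and> i < card (T ! Suc j) \<and> LegPlus T i j \<noteq> {}}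
      = (\<lambda>(j,i). (i,j)) ` ?S"
    by (auto simp: LegPlus_def LP_def image_iff)
  have inj: "inj_on (\<lambda>(j,i). (i::nat, j::nat)) ?S" by (auto simp: inj_on_def)
  have "Phi T = (\<Prod>(j,i)\<in>?S. qint (card (LP (T ! j) (T ! Suc j) i)))"
    unfolding Phi_def set prod.reindex[OF inj]
    by (rule prod.cong) (auto simp: LegPlus_def LP_def)
  also have "\<dots> = (\<Prod>j<length T - 1. PhiP (T ! j) (T ! Suc j))"
    unfolding PhiP_def by (rule prod.Sigma[symmetric]) auto
  finally show ?thesis .
qed

theorem mainTheorem12:
  fixes n :: nat and T :: "nat set list"
  assumes "SSYT n T"
  shows "P (D T) = Phi T * phantom T"
proof -
  have pairs: "\<forall>j. Suc j < length T \<longrightarrow> okp (T ! j) (T ! Suc j)"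
  proof (intro allI impI)
    fix j assume j: "Suc j < length T"
    have "T ! j \<in> set T" "T ! Suc j \<in> set T" using j by auto
    hence "finite (T ! j)" "finite (T ! Suc j)"
      using assms unfolding SSYT_def by (meson finite_atLeastAtMost finite_subset)+
    thus "okp (T ! j) (T ! Suc j)" using assms j unfolding SSYT_def okp_def by auto
  qed
  have HD: "H 0 (D T) = Phi T * phantom T"
  proof -
    have "H 0 (D T) = (\<Prod>j<length T - 1. PhiP (T ! j) (T ! Suc j) * qfact (card (T ! j) - card (T ! Suc j)))"
      unfolding H_D[OF pairs]
      by (rule prod.cong[OF refl]) (use pairs D2_pair in auto)
    thus ?thesis unfolding Phi_eq phantom_def prod.distrib .
  qed
  have nz: "Phi T * phantom T \<noteq> 0"
  proof -
    have "PhiP (T ! j) (T ! Suc j) * qfact (card (T ! j) - card (T ! Suc j)) \<noteq> 0"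
      if "j < length T - 1" for j
      using that pairs PhiP_nz qfact_nz by (auto simp: okp_def)
    hence "(\<Prod>j<length T - 1. PhiP (T ! j) (T ! Suc j) * qfact (card (T ! j) - card (T ! Suc j))) \<noteq> 0"
      by (subst prod_zero_iff) auto
    thus ?thesis unfolding Phi_eq phantom_def prod.distrib .
  qed
  show ?thesis
    using H_blocks[of 0 "D T"] HD nz by (simp add: P_Pg)
qed

end
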